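(* Let $K=2$ and suppose that for every horizon $T$ (a multiple of $100$) a valid pair $(\eta,\gamma)=(\eta_T,\gamma_T)$ in the non-trivial regime is chosen. Then there exist constants $c_1,c_2,c_3>0$ and $T_0$ such that for all $T\ge T_0$, WSU-UX run on the two-phase loss sequence satisfies $$\mathbb{E}[\mathcal R_T]\ge c_1\frac1\eta+c_2\frac{\eta TK}{\gamma}+c_3\gamma T.$$
   Context: WSU-UX. Fix integers $K\ge 2$ and $T\ge 1$ and hyperparameters $\eta,\gamma$. The pair $(\eta,\gamma)$ is called valid if $\eta,\gamma\in(0,1/2)$ and $\eta K/\gamma\le 1/2$. Given a fixed loss sequence $\ell_t\in[0,1]^K$, WSU-UX sets $\pi_{1,i}=1/K$ and in each round $t$: forms $\tilde\pi_{t,i}=(1-\gamma)\pi_{t,i}+\gamma/K$; draws $I_t$ with $\Pr(I_t=i\mid\mathcal F_{t-1})=\tilde\pi_{t,i}$; sets $\hat\ell_{t,i}=\ell_{t,i}\mathbf 1[I_t=i]/\tilde\pi_{t,i}$; and updates $\pi_{t+1,i}=\pi_{t,i}\bigl(1-\eta(\hat\ell_{t,i}-\sum_{j}\pi_{t,j}\hat\ell_{t,j})\bigr)$; $\mathcal F_t$ is the history generated by $I_1,\dots,I_t$. The regret is $\mathbb{E}[\mathcal R_T]=\mathbb{E}[\sum_{t}\sum_{j}\tilde\pi_{t,j}\ell_{t,j}]-\min_i\sum_t\ell_{t,i}$. Non-trivial regime: $\eta\ge T^{-2/3}$ and $\gamma\le T^{-1/3}$. Two-phase loss sequence ($K=2$,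 $T$ a multiple of $100$, $T_1=T/100$): $\ell_{t,1}=1,\ell_{t,2}=0$ for $1\le t\le T_1$ and $\ell_{t,1}=0,\ell_{t,2}=1$ for $T_1<t\le T$. *)

theory Defs
  imports Complex_Main
begin

text \<open>Arms are indexed by 0,...,K-1 (arm i of the paper is i-1 here).
  A loss sequence is a function l :: nat => nat => real, l t i = loss of arm i at round t
  (rounds t = 1,...,T). A history is the list [I_1,...,I_s] of drawn arms.\<close>

definition mix :: "nat \<Rightarrow> real \<Rightarrow> (nat \<Rightarrow> real) \<Rightarrow> (nat \<Rightarrow> real)" where
  "mix K gamma p = (\<lambda>i. (1 - gamma) * p i + gamma / real K)"

definition loss_est :: "nat \<Rightarrow> real \<Rightarrow> (nat \<Rightarrow> real) \<Rightarrow> (nat \<Rightarrow> real) \<Rightarrow> nat \<Rightarrow> (nat \<Rightarrow> real)" where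
  "loss_est K gamma p lt I = (\<lambda>i. (if i = I then lt i / mix K gamma p i else 0))"

definition wsu_update :: "nat \<Rightarrow> real \<Rightarrow> real \<Rightarrow> (nat \<Rightarrow> real) \<Rightarrow> (nat \<Rightarrow> real) \<Rightarrow> nat \<Rightarrow> (nat \<Rightarrow> real)" where
  "wsu_update K eta gamma p lt I =
     (let lh = loss_est K gamma p lt I in
      (\<lambda>i. p i * (1 - eta * (lh i - (\<Sum>j<K. p j * lh j)))))"

fun wsu_run :: "nat \<Rightarrow> real \<Rightarrow> real \<Rightarrow> (nat \<Rightarrow> nat \<Rightarrow> real) \<Rightarrow> nat \<Rightarrow> (nat \<Rightarrow> real) \<Rightarrow> nat list \<Rightarrow> (nat \<Rightarrow> real)" where
  "wsu_run K eta gamma l t p [] = p"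
| "wsu_run K eta gamma l t p (I # Is) = wsu_run K eta gamma l (Suc t) (wsu_update K eta gamma p (l t) I) Is"

fun hist_prob :: "nat \<Rightarrow> real \<Rightarrow> real \<Rightarrow> (nat \<Rightarrow> nat \<Rightarrow> real) \<Rightarrow> nat \<Rightarrow> (nat \<Rightarrow> real) \<Rightarrow> nat list \<Rightarrow> real" where
  "hist_prob K eta gamma l t p [] = 1"
| "hist_prob K eta gamma l t p (I # Is) =
     mix K gamma p I * hist_prob K eta gamma l (Suc t) (wsu_update K eta gamma p (l t) I) Is"

definition pi_init :: "nat \<Rightarrow> (nat \<Rightarrow> real)" where
  "pi_init K = (\<lambda>i. 1 / real K)"

definition histories :: "nat \<Rightarrow> nat \<Rightarrow> nat list set" where
  "histories K s = {h. set h \<subseteq> {..<K} \<and> length h = s}"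

definition exp_round_loss :: "nat \<Rightarrow> real \<Rightarrow> real \<Rightarrow> (nat \<Rightarrow> nat \<Rightarrow> real) \<Rightarrow> nat \<Rightarrow> real" where
  "exp_round_loss K eta gamma l t =
     (\<Sum>h\<in>histories K (t - 1).
        hist_prob K eta gamma l 1 (pi_init K) h *
        (\<Sum>j<K. mix K gamma (wsu_run K eta gamma l 1 (pi_init K) h) j * l t j))"

definition exp_regret :: "nat \<Rightarrow> real \<Rightarrow> real \<Rightarrow> (nat \<Rightarrow> nat \<Rightarrow> real) \<Rightarrow> nat \<Rightarrow> real" where
  "exp_regret K eta gamma l T =
     (\<Sum>t=1..T. exp_round_loss K eta gamma l t) - (MIN i\<in>{..<K}. \<Sum>t=1..T. l t i)"

definition valid_pair :: "nat \<Rightarrow> real \<Rightarrow> real \<Rightarrow> bool" where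
  "valid_pair K eta gamma \<longleftrightarrow> 0 < eta \<and> eta < 1/2 \<and> 0 < gamma \<and> gamma < 1/2 \<and> eta * real K / gamma \<le> 1/2"

definition nontrivial_regime :: "nat \<Rightarrow> real \<Rightarrow> real \<Rightarrow> bool" where
  "nontrivial_regime T eta gamma \<longleftrightarrow> eta \<ge> real T powr (-2/3) \<and> gamma \<le> real T powr (-1/3)"

definition two_phase :: "nat \<Rightarrow> nat \<Rightarrow> nat \<Rightarrow> real" where
  "two_phase T t i = (if t \<le> T div 100 then (if i = 0 then 1 else 0) else (if i = 0 then 0 else 1))"

end

theory Submission
  imports Defs "HOL-Real_Asymp.Real_Asymp"
begin


lemma run_snoc: "wsu_run K e g l t p (h @ [I]) = wsu_update K e g (wsu_run K e g l t p h) (l (t + length h)) I"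
  by (induction h arbitrary: t p) auto

lemma prob_snoc: "hist_prob K e g l t p (h @ [I]) = hist_prob K e g l t p h * mix K g (wsu_run K e g l t p h) I"
  by (induction h arbitrary: t p) auto

lemma finite_hist: "finite (histories K n)"
  unfolding histories_def by (rule finite_lists_length_eq) simp

lemma histories_Suc: "histories K (Suc n) = (\<lambda>(h,I). h @ [I]) ` (histories K n \<times> {..<K})"
proof (rule set_eqI, rule iffI)
  fix x assume "x \<in> histories K (Suc n)"
  then have x: "set x \<subseteq> {..<K}" "length x = Suc n" by (auto simp: histories_def)
  then obtain h I where "x = h @ [I]" by (metis length_Suc_conv_rev)
  with x show "x \<in> (\<lambda>(h,I). h @ [I]) ` (histories K n \<times> {..<K})"
    by (auto simp: histories_def image_iff)
qed (auto simp: histories_def)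

lemma sum_hist_Suc: "(\<Sum>x\<in>histories K (Suc n). F x) = (\<Sum>h\<in>histories K n. \<Sum>I<K. F (h @ [I]))"
proof -
  have inj: "inj_on (\<lambda>(h,I). h @ [I]) (histories K n \<times> {..<K})"
    by (auto simp: inj_on_def)
  have "(\<Sum>x\<in>histories K (Suc n). F x) = (\<Sum>x\<in>histories K n \<times> {..<K}. F ((\<lambda>(h,I). h @ [I]) x))"
    unfolding histories_Suc by (rule sum.reindex[OF inj, unfolded comp_def])
  also have "\<dots> = (\<Sum>h\<in>histories K n. \<Sum>I<K. F (h @ [I]))"
    by (simp add: sum.cartesian_product split_def)
  finally show ?thesis .
qed

definition EE :: "nat \<Rightarrow> real \<Rightarrow> real \<Rightarrow> nat \<Rightarrow> ((nat \<Rightarrow> real) \<Rightarrow> real) \<Rightarrow> real" where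
  "EE T e g n f = (\<Sum>h\<in>histories 2 n. hist_prob 2 e g (two_phase T) 1 (pi_init 2) h *
       f (wsu_run 2 e g (two_phase T) 1 (pi_init 2) h))"

lemma EE_Suc: "EE T e g (Suc n) f = EE T e g n (\<lambda>s. \<Sum>I<2. mix 2 g s I * f (wsu_update 2 e g s (two_phase T (Suc n)) I))"
  unfolding EE_def sum_hist_Suc
  by (intro sum.cong refl) (auto simp: run_snoc prob_snoc sum_distrib_left mult.assoc histories_def)

lemma EE_0: "EE T e g 0 f = f (pi_init 2)"
proof -
  have "histories 2 0 = {[]}" by (auto simp: histories_def)
  then show ?thesis by (simp add: EE_def)
qed

lemma EE_add: "EE T e g n (\<lambda>s. f s + h s) = EE T e g n f + EE T e g n h"
  by (simp add: EE_def distrib_left sum.distrib)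

lemma EE_cmult: "EE T e g n (\<lambda>s. c * f s) = c * EE T e g n f"
  by (simp add: EE_def sum_distrib_left algebra_simps)

lemma EE_diff: "EE T e g n (\<lambda>s. f s - h s) = EE T e g n f - EE T e g n h"
  by (simp add: EE_def right_diff_distrib sum_subtractf)




definition mm :: "real \<Rightarrow> real \<Rightarrow> real" where "mm g p = (1 - g) * p + g / 2"
definition U1 :: "real \<Rightarrow> real \<Rightarrow> real \<Rightarrow> real" where "U1 e g p = p * (1 - e * (1 - p) / mm g p)"
definition U2 :: "real \<Rightarrow> real \<Rightarrow> real \<Rightarrow> real" where "U2 e g p = p * (1 + e * (1 - p) / (1 - mm g p))"
definition Gf :: "real \<Rightarrow> real \<Rightarrow> real \<Rightarrow> real" where "Gf e g p = e^2 * (1 - p)^2 / (4 * mm g p)"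

lemma ln_quad: fixes x :: real assumes "0 \<le> x" "x \<le> 1/2" shows "ln (1 - x) \<le> - x - x^2/4"
proof -
  have a: "ln (1 - x/2) \<le> - (x/2)" using assms by (intro ln_one_minus_pos_upper_bound) auto
  have pos: "0 < (1 - x) / (1 - x/2)" using assms by auto
  have b: "ln ((1 - x) / (1 - x/2)) \<le> (1 - x) / (1 - x/2) - 1" by (rule ln_le_minus_one[OF pos])
  have c: "(1 - x) / (1 - x/2) - 1 \<le> - x/2 - x^2/4"
  proof -
    have d: "0 < 1 - x/2" using assms by auto
    have "(1 - x) / (1 - x/2) - 1 = - (x/2) / (1 - x/2)" using d by (simp add: field_simps)
    also have "\<dots> \<le> - x/2 - x^2/4"
    proof -
      have "(x/2 + x^2/4) * (1 - x/2) \<le> x/2" using assms by (simp add: algebra_simps power2_eq_square power3_eq_cube)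
      then have "x/2 + x^2/4 \<le> (x/2) / (1 - x/2)" using d by (subst le_divide_eq) auto
      then show ?thesis by simp
    qed
    finally show ?thesis .
  qed
  have "ln (1 - x) = ln (1 - x/2) + ln ((1 - x) / (1 - x/2))"
  proof -
    have "ln (1 - x/2) + ln ((1 - x) / (1 - x/2)) = ln ((1 - x/2) * ((1 - x) / (1 - x/2)))"
      using assms pos by (intro ln_mult_pos[symmetric]) auto
    also have "(1 - x/2) * ((1 - x) / (1 - x/2)) = 1 - x" using assms by simp
    finally show ?thesis by simp
  qed
  with a b c show ?thesis by linarith
qed

lemma fr: fixes x y B p :: real assumes "0 < B" "0 < p" "x * p \<le> y * B" shows "x / B \<le> y / p"
  using assms by (simp add: divide_le_eq le_divide_eq mult.commute mult.left_commute)

locale vp =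
  fixes e g :: real
  assumes e0: "0 < e" and g0: "0 < g" and g1: "g < 1/2" and eg: "4 * e \<le> g"
begin

lemma mm_bounds: assumes "0 \<le> p" "p \<le> 1" shows "g/2 \<le> mm g p" "mm g p \<le> 1 - g/2" "mm g p \<le> p + g/2"
proof -
  have "0 \<le> (1 - g) * p" using assms g1 by simp
  moreover have "(1 - g) * p \<le> 1 - g" using assms g1 by (simp add: mult_left_le)
  moreover have "(1 - g) * p \<le> p" using assms g0 by (simp add: algebra_simps)
  ultimately show "g/2 \<le> mm g p" "mm g p \<le> 1 - g/2" "mm g p \<le> p + g/2" unfolding mm_def by auto
qed

lemma e_small: "e \<le> g/4" "e < 1/8" using eg g1 by auto

context fixes p :: real assumes p0: "0 < p" and p1: "p < 1" begin

lemma m_pos: "0 < mm g p" "0 < 1 - mm g p" using mm_bounds[of p] p0 p1 g0 by auto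

lemma x_bnd: "0 \<le> e * (1 - p) / mm g p" "e * (1 - p) / mm g p \<le> 1/2"
proof -
  have m: "g/2 \<le> mm g p" using mm_bounds[of p] p0 p1 by auto
  have "e * (1 - p) \<le> e" using e0 p0 by (simp add: mult_left_le)
  also have "\<dots> \<le> mm g p / 2" using m eg by simp
  finally have "e * (1 - p) \<le> mm g p / 2" .
  then show "e * (1 - p) / mm g p \<le> 1/2" using m_pos by (simp add: divide_le_eq)
  show "0 \<le> e * (1 - p) / mm g p" using m_pos e0 p1 by simp
qed

lemma y_bnd: "0 \<le> e * (1 - p) / (1 - mm g p)" "e * p / (1 - mm g p) \<le> 1/2"
proof -
  have m: "g/2 \<le> 1 - mm g p" using mm_bounds[of p] p0 p1 by auto
  have "e * p \<le> e" using e0 p1 by (simp add: mult_left_le)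
  also have "\<dots> \<le> (1 - mm g p) / 2" using m eg by simp
  finally have "e * p \<le> (1 - mm g p) / 2" .
  then show "e * p / (1 - mm g p) \<le> 1/2" using m_pos by (simp add: divide_le_eq)
  show "0 \<le> e * (1 - p) / (1 - mm g p)" using m_pos e0 p1 by simp
qed

lemma U1_bnd: "0 < U1 e g p" "U1 e g p \<le> p"
proof -
  have a: "0 < 1 - e * (1 - p) / mm g p" using x_bnd by linarith
  show "0 < U1 e g p" unfolding U1_def using a p0 by simp
  show "U1 e g p \<le> p" unfolding U1_def using x_bnd p0 by (simp add: mult_le_cancel_left1)
qed

lemma U2_bnd: "p \<le> U2 e g p" "U2 e g p < 1"
proof -
  show "p \<le> U2 e g p" using y_bnd p0 unfolding U2_def by (simp add: mult_le_cancel_left1)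
  have "1 - U2 e g p = (1 - p) * (1 - e * p / (1 - mm g p))"
    using m_pos unfolding U2_def by (simp add: field_simps)
  moreover have "0 < (1 - p) * (1 - e * p / (1 - mm g p))"
  proof -
    have "0 < 1 - e * p / (1 - mm g p)" using y_bnd by linarith
    then show ?thesis using p1 by simp
  qed
  ultimately show "U2 e g p < 1" by simp
qed

lemma L1: "mm g p * ln (U1 e g p) + (1 - mm g p) * ln p \<le> ln p - e * (1 - p) - Gf e g p"
proof -
  define x where "x = e * (1 - p) / mm g p"
  have x: "0 \<le> x" "x \<le> 1/2" using x_bnd unfolding x_def by auto
  have "ln (U1 e g p) = ln p + ln (1 - x)"
    unfolding U1_def x_def[symmetric] using x p0 by (intro ln_mult_pos) auto
  then have "mm g p * ln (U1 e g p) + (1 - mm g p) * ln p = ln p + mm g p * ln (1 - x)"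
    by (simp add: algebra_simps)
  also have "\<dots> \<le> ln p + mm g p * (- x - x^2/4)"
    using ln_quad[OF x] m_pos by (simp add: mult_left_mono)
  also have "mm g p * (- x - x^2/4) = - e * (1 - p) - Gf e g p"
    unfolding x_def Gf_def using m_pos by (simp add: field_simps power2_eq_square)
  finally show ?thesis by simp
qed

lemma L2: "mm g p * ln p + (1 - mm g p) * ln (U2 e g p) \<le> ln p + e * (1 - p)"
proof -
  define y where "y = e * (1 - p) / (1 - mm g p)"
  have y: "0 \<le> y" using y_bnd unfolding y_def by auto
  have "ln (U2 e g p) = ln p + ln (1 + y)"
    unfolding U2_def y_def[symmetric] using y p0 by (intro ln_mult_pos) auto
  then have "mm g p * ln p + (1 - mm g p) * ln (U2 e g p) = ln p + (1 - mm g p) * ln (1 + y)"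
    by (simp add: algebra_simps)
  also have "\<dots> \<le> ln p + (1 - mm g p) * y"
    using ln_add_one_self_le_self[OF y] m_pos by (simp add: mult_left_mono)
  also have "(1 - mm g p) * y = e * (1 - p)"
    unfolding y_def using m_pos by simp
  finally show ?thesis by simp
qed

lemma Gf_nonneg: "0 \<le> Gf e g p" unfolding Gf_def using m_pos by simp

lemma Gf_lower: assumes "p \<le> 1/2" shows "e^2/16 * (3/(2*g) - p/g^2) \<le> Gf e g p"
proof -
  define z where "z = p + g/2"
  have z: "0 < z" "mm g p \<le> z" using mm_bounds[of p] p0 p1 g0 unfolding z_def by auto
  have t: "3/(2*g) - p/g^2 \<le> 1 / z"
  proof -
    have "(3/(2*g) - p/g^2) * z = 1 - (p/g - 1/2)^2"
      using g0 unfolding z_def by (simp add: field_simps power2_eq_square)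
    also have "\<dots> \<le> 1" by simp
    finally show ?thesis using z by (simp add: le_divide_eq)
  qed
  also have "1 / z \<le> 1 / mm g p" using z m_pos by (simp add: frac_le)
  finally have a: "3/(2*g) - p/g^2 \<le> 1 / mm g p" .
  have b: "1/4 \<le> (1 - p)^2"
  proof -
    have "(1/2::real)^2 \<le> (1 - p)^2" using assms by (intro power_mono) auto
    then show ?thesis by (simp add: power2_eq_square)
  qed
  have "e^2/16 * (3/(2*g) - p/g^2) \<le> e^2/16 * (1 / mm g p)"
    using a by (intro mult_left_mono) auto
  also have "\<dots> = e^2 * (1/4) / (4 * mm g p)" by simp
  also have "\<dots> \<le> e^2 * (1 - p)^2 / (4 * mm g p)"
    using b m_pos by (intro divide_right_mono mult_left_mono) auto
  finally show ?thesis unfolding Gf_def .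
qed

lemma L3: "mm g p * ((1 - U1 e g p) / U1 e g p) + (1 - mm g p) * ((1 - p) / p) \<le> (1 + 2*e) * ((1 - p) / p)"
proof -
  define m where "m = mm g p"
  have m: "0 < m" "2 * e \<le> m" using m_pos mm_bounds[of p] p0 p1 eg unfolding m_def by auto
  have d: "0 < m - e * (1 - p)" using m e0 p0 p1 by (smt (verit) mult_left_le)
  have U: "U1 e g p = p * (m - e * (1 - p)) / m" unfolding U1_def m_def[symmetric] using m by (simp add: field_simps)
  have U': "1 - p * (m - e * (1 - p)) / m = (1 - p) * (m + p * e) / m"
  proof -
    have "1 - p * (m - e * (1 - p)) / m = (m - p * (m - e * (1 - p))) / m" using m by (simp add: field_simps)
    also have "m - p * (m - e * (1 - p)) = (1 - p) * (m + p * e)" by (simp add: algebra_simps)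
    finally show ?thesis .
  qed
  have key: "(m + p * e) * m \<le> (m + 2*e) * (m - e * (1 - p))"
  proof -
    have "2 * e * (1 - p) \<le> m" using m e0 p0 p1 by (smt (verit) mult_left_le)
    then have "0 \<le> e * (m - 2 * e * (1 - p))" using e0 by simp
    then show ?thesis by (simp add: algebra_simps)
  qed
  have "m * ((1 - U1 e g p) / U1 e g p) = m * (((1 - p) * (m + p * e) / m) / (p * (m - e * (1 - p)) / m))"
    by (simp only: U U')
  also have "\<dots> = (m * ((1 - p) * (m + p * e))) / (p * (m - e * (1 - p)))"
    using m by simp
  also have "\<dots> \<le> ((1 - p) * (m + 2*e)) / p"
  proof (rule fr)
    show "0 < p * (m - e * (1 - p))" using p0 d by simp
    show "0 < p" by (rule p0)
    have "(1 - p) * p * ((m + p * e) * m) \<le> (1 - p) * p * ((m + 2*e) * (m - e * (1 - p)))"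
      using key p0 p1 by (intro mult_left_mono) auto
    then show "m * ((1 - p) * (m + p * e)) * p \<le> (1 - p) * (m + 2 * e) * (p * (m - e * (1 - p)))"
      by (simp add: mult_ac)
  qed
  finally have "m * ((1 - U1 e g p) / U1 e g p) \<le> (1 - p) * (m + 2*e) / p" .
  moreover have "(1 + 2*e) * ((1 - p) / p) = (1 - p) * (m + 2*e) / p + (1 - m) * ((1 - p) / p)"
    by (simp add: divide_simps) (simp add: algebra_simps)
  ultimately show ?thesis unfolding m_def[symmetric] by linarith
qed

lemma L4: "mm g p * ((1 - p) / p) + (1 - mm g p) * ((1 - U2 e g p) / U2 e g p) \<le> (1 - 2*e/3) * ((1 - p) / p)"
proof -
  define n where "n = 1 - mm g p"
  have n: "0 < n" "2 * e \<le> n" using m_pos mm_bounds[of p] p0 p1 eg unfolding n_def by auto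
  have d: "0 < n + e * (1 - p)" using n e0 p0 p1 by (smt (verit) mult_nonneg_nonneg)
  have U: "U2 e g p = p * (n + e * (1 - p)) / n" unfolding U2_def n_def[symmetric] using n by (simp add: field_simps)
  have U': "1 - p * (n + e * (1 - p)) / n = (1 - p) * (n - e * p) / n"
  proof -
    have "1 - p * (n + e * (1 - p)) / n = (n - p * (n + e * (1 - p))) / n" using n by (simp add: field_simps)
    also have "n - p * (n + e * (1 - p)) = (1 - p) * (n - e * p)" by (simp add: algebra_simps)
    finally show ?thesis .
  qed
  have key: "(n - e * p) * n \<le> (n - 2*e/3) * (n + e * (1 - p))"
  proof -
    have "2 * e * (1 - p) \<le> n" using n e0 p0 p1 by (smt (verit) mult_left_le)
    then have "0 \<le> e * (n - 2 * e * (1 - p))" using e0 by simp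
    then show ?thesis by (simp add: algebra_simps)
  qed
  have "n * ((1 - U2 e g p) / U2 e g p) = n * (((1 - p) * (n - e * p) / n) / (p * (n + e * (1 - p)) / n))"
    by (simp only: U U')
  also have "\<dots> = (n * ((1 - p) * (n - e * p))) / (p * (n + e * (1 - p)))"
    using n by simp
  also have "\<dots> \<le> ((1 - p) * (n - 2*e/3)) / p"
  proof (rule fr)
    show "0 < p * (n + e * (1 - p))" using p0 d by simp
    show "0 < p" by (rule p0)
    have "(1 - p) * p * ((n - e * p) * n) \<le> (1 - p) * p * ((n - 2*e/3) * (n + e * (1 - p)))"
      using key p0 p1 by (intro mult_left_mono) auto
    then show "n * ((1 - p) * (n - e * p)) * p \<le> (1 - p) * (n - 2*e/3) * (p * (n + e * (1 - p)))"
      by (simp add: mult_ac)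
  qed
  finally have "n * ((1 - U2 e g p) / U2 e g p) \<le> (1 - p) * (n - 2*e/3) / p" .
  moreover have "(1 - 2*e/3) * ((1 - p) / p) = (1 - n) * ((1 - p) / p) + (1 - p) * (n - 2*e/3) / p"
    by (simp add: divide_simps) (simp add: algebra_simps)
  moreover have "mm g p = 1 - n" unfolding n_def by simp
  ultimately show ?thesis unfolding n_def[symmetric] by (simp only:)
qed

lemma L5: assumes "p \<le> 1/2" shows "mm g p * U1 e g p + (1 - mm g p) * p \<le> (1 - e/2) * p"
proof -
  have "mm g p * U1 e g p + (1 - mm g p) * p = p - e * p * (1 - p)"
    unfolding U1_def using m_pos by (simp add: field_simps)
  also have "\<dots> \<le> (1 - e/2) * p"
  proof -
    have "e * p * (1/2) \<le> e * p * (1 - p)" using assms e0 p0 by (intro mult_left_mono) auto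
    then show ?thesis by (simp add: algebra_simps)
  qed
  finally show ?thesis .
qed

lemma ln_lower: "- ((1 - p) / p) \<le> ln p"
proof -
  have "ln (1/p) \<le> 1/p - 1" using p0 by (intro ln_le_minus_one) auto
  then show ?thesis using p0 by (simp add: ln_div field_simps)
qed

end
end



lemma sum2: "(\<Sum>i<(2::nat). f i) = f 0 + f 1" by (simp add: numeral_2_eq_2)

lemma mix0: "mix 2 g s 0 = mm g (s 0)" by (simp add: mix_def mm_def)
lemma mix1: "s 1 = 1 - s 0 \<Longrightarrow> mix 2 g s 1 = 1 - mm g (s 0)"
proof -
  assume a: "s 1 = 1 - s 0"
  have "mix 2 g s 1 = (1 - g) * (1 - s 0) + g / 2" using a by (simp add: mix_def)
  then show ?thesis by (simp add: mm_def algebra_simps)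
qed

lemma aux2: fixes p n e :: real shows "n \<noteq> 0 \<Longrightarrow> (1 - p) * (1 - e * (1 / n - (1 - p) / n)) = 1 - p * (1 + e * (1 - p) / n)"
  by (simp add: field_simps)

locale run = vp +
  fixes T :: nat
begin

definition Inv :: "nat \<Rightarrow> (nat \<Rightarrow> real) \<Rightarrow> bool" where
  "Inv n s \<longleftrightarrow> s 1 = 1 - s 0 \<and> 0 < s 0 \<and> s 0 < 1 \<and> (n \<le> T div 100 \<longrightarrow> s 0 \<le> 1/2)"

lemma upd1:
  assumes "t \<le> T div 100" "s 1 = 1 - s 0" "0 < s 0" "s 0 < 1"
  shows "wsu_update 2 e g s (two_phase T t) 0 0 = U1 e g (s 0)"
    "wsu_update 2 e g s (two_phase T t) 0 1 = 1 - U1 e g (s 0)"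
    "wsu_update 2 e g s (two_phase T t) 1 0 = s 0"
    "wsu_update 2 e g s (two_phase T t) 1 1 = 1 - s 0"
proof -
  have m: "0 < mm g (s 0)" using m_pos assms by auto
  have s1: "s (Suc 0) = 1 - s 0" using assms by simp
  have mx: "mix 2 g s (Suc 0) = 1 - mm g (s 0)" using mix1[of s g] assms by simp
  note assms = assms(1,3,4)
  show "wsu_update 2 e g s (two_phase T t) 0 0 = U1 e g (s 0)"
    using assms m by (simp add: wsu_update_def loss_est_def two_phase_def sum2 mix0 mx s1 U1_def field_simps)
  show "wsu_update 2 e g s (two_phase T t) 0 1 = 1 - U1 e g (s 0)"
    using assms m by (simp add: wsu_update_def loss_est_def two_phase_def sum2 mix0 mx s1 U1_def field_simps)
  show "wsu_update 2 e g s (two_phase T t) 1 0 = s 0"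
    using assms m by (simp add: wsu_update_def loss_est_def two_phase_def sum2 s1)
  show "wsu_update 2 e g s (two_phase T t) 1 1 = 1 - s 0"
    using assms m by (simp add: wsu_update_def loss_est_def two_phase_def sum2 s1)
qed

lemma upd2:
  assumes "\<not> t \<le> T div 100" "s 1 = 1 - s 0" "0 < s 0" "s 0 < 1"
  shows "wsu_update 2 e g s (two_phase T t) 1 0 = U2 e g (s 0)"
    "wsu_update 2 e g s (two_phase T t) 1 1 = 1 - U2 e g (s 0)"
    "wsu_update 2 e g s (two_phase T t) 0 0 = s 0"
    "wsu_update 2 e g s (two_phase T t) 0 1 = 1 - s 0"
proof -
  have m: "0 < 1 - mm g (s 0)" using m_pos assms by auto
  have s1: "s (Suc 0) = 1 - s 0" using assms by simp
  have mx: "mix 2 g s (Suc 0) = 1 - mm g (s 0)" using mix1[of s g] assms by simp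
  note assms = assms(1,3,4)
  show "wsu_update 2 e g s (two_phase T t) 1 0 = U2 e g (s 0)"
    using assms m by (simp add: wsu_update_def loss_est_def two_phase_def sum2 mix0 mx s1 U2_def)
  show "wsu_update 2 e g s (two_phase T t) 1 1 = 1 - U2 e g (s 0)"
    using assms m by (simp add: wsu_update_def loss_est_def two_phase_def sum2 mix0 mx s1 U2_def aux2)
  show "wsu_update 2 e g s (two_phase T t) 0 0 = s 0"
    using assms m by (simp add: wsu_update_def loss_est_def two_phase_def sum2 s1)
  show "wsu_update 2 e g s (two_phase T t) 0 1 = 1 - s 0"
    using assms m by (simp add: wsu_update_def loss_est_def two_phase_def sum2 s1)
qed

abbreviation "runh \<equiv> wsu_run 2 e g (two_phase T) 1 (pi_init 2)"
abbreviation "hp \<equiv> hist_prob 2 e g (two_phase T) 1 (pi_init 2)"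

lemma hist_SucE:
  assumes "h \<in> histories 2 (Suc n)"
  obtains h' I where "h = h' @ [I]" "h' \<in> histories 2 n" "I < 2"
  using assms unfolding histories_Suc by auto

lemma inv: "h \<in> histories 2 n \<Longrightarrow> Inv n (runh h) \<and> 0 \<le> hp h"
proof (induction n arbitrary: h)
  case 0
  then have "h = []" by (simp add: histories_def)
  then show ?case by (simp add: Inv_def pi_init_def)
next
  case (Suc n)
  from Suc.prems obtain h' I where h: "h = h' @ [I]" "h' \<in> histories 2 n" "I < 2" by (rule hist_SucE)
  define s where "s = runh h'"
  have IH: "Inv n s" "0 \<le> hp h'" using Suc.IH[OF h(2)] unfolding s_def by auto
  have len: "length h' = n" using h(2) by (simp add: histories_def)
  have run: "runh h = wsu_update 2 e g s (two_phase T (Suc n)) I"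
    unfolding h s_def by (simp add: run_snoc len)
  have prob: "hp h = hp h' * mix 2 g s I"
    unfolding h s_def by (simp add: prob_snoc)
  have sI: "s 1 = 1 - s 0" "0 < s 0" "s 0 < 1" using IH unfolding Inv_def by auto
  have I: "I = 0 \<or> I = 1" using h(3) by auto
  have mixpos: "0 \<le> mix 2 g s I"
    using I m_pos[OF sI(2,3)] mix0[of g s] mix1[OF sI(1)] by auto
  have "0 \<le> hp h" unfolding prob using IH(2) mixpos by simp
  moreover have "Inv (Suc n) (runh h)"
  proof (cases "Suc n \<le> T div 100")
    case True
    have half: "s 0 \<le> 1/2" using IH True unfolding Inv_def by auto
    show ?thesis
    proof (cases "I = 0")
      case True
      with upd1[OF \<open>Suc n \<le> T div 100\<close> sI] U1_bnd[OF sI(2,3)] half show ?thesis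
        unfolding run Inv_def by auto
    next
      case False
      then have "I = 1" using I by simp
      with upd1[OF \<open>Suc n \<le> T div 100\<close> sI] half sI show ?thesis
        unfolding run Inv_def by auto
    qed
  next
    case False
    show ?thesis
    proof (cases "I = 0")
      case True
      with upd2[OF \<open>\<not> Suc n \<le> T div 100\<close> sI] sI False show ?thesis
        unfolding run Inv_def by auto
    next
      case F: False
      then have "I = 1" using I by simp
      with upd2[OF \<open>\<not> Suc n \<le> T div 100\<close> sI] U2_bnd[OF sI(2,3)] sI False show ?thesis
        unfolding run Inv_def by auto
    qed
  qed
  ultimately show ?case by simp
qed

lemma EE_mono: assumes "\<And>s. Inv n s \<Longrightarrow> f s \<le> f' s" shows "EE T e g n f \<le> EE T e g n f'"
  unfolding EE_def using inv assms by (intro sum_mono mult_left_mono) auto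

lemma EE_cong: assumes "\<And>s. Inv n s \<Longrightarrow> f s = f' s" shows "EE T e g n f = EE T e g n f'"
  unfolding EE_def using inv assms by (intro sum.cong) auto

lemma step1: assumes "Suc n \<le> T div 100"
  shows "EE T e g (Suc n) (\<lambda>s. F (s 0)) = EE T e g n (\<lambda>s. mm g (s 0) * F (U1 e g (s 0)) + (1 - mm g (s 0)) * F (s 0))"
  unfolding EE_Suc
proof (rule EE_cong)
  fix s assume "Inv n s"
  then have sI: "s 1 = 1 - s 0" "0 < s 0" "s 0 < 1" unfolding Inv_def by auto
  show "(\<Sum>I<2. mix 2 g s I * F (wsu_update 2 e g s (two_phase T (Suc n)) I 0)) =
        mm g (s 0) * F (U1 e g (s 0)) + (1 - mm g (s 0)) * F (s 0)"
    using upd1[OF assms sI] mix0[of g s] mix1[OF sI(1)] by (simp add: sum2)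
qed

lemma step2: assumes "\<not> Suc n \<le> T div 100"
  shows "EE T e g (Suc n) (\<lambda>s. F (s 0)) = EE T e g n (\<lambda>s. mm g (s 0) * F (s 0) + (1 - mm g (s 0)) * F (U2 e g (s 0)))"
  unfolding EE_Suc
proof (rule EE_cong)
  fix s assume "Inv n s"
  then have sI: "s 1 = 1 - s 0" "0 < s 0" "s 0 < 1" unfolding Inv_def by auto
  show "(\<Sum>I<2. mix 2 g s I * F (wsu_update 2 e g s (two_phase T (Suc n)) I 0)) =
        mm g (s 0) * F (s 0) + (1 - mm g (s 0)) * F (U2 e g (s 0))"
    using upd2[OF assms sI] mix0[of g s] mix1[OF sI(1)] by (simp add: sum2)
qed

lemma EE_const: "EE T e g n (\<lambda>s. c) = c"
proof (induction n)
  case 0 show ?case by (simp add: EE_0)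
next
  case (Suc n)
  have "EE T e g (Suc n) (\<lambda>s. c) = EE T e g n (\<lambda>s. \<Sum>I<2. mix 2 g s I * c)" by (simp add: EE_Suc)
  also have "\<dots> = EE T e g n (\<lambda>s. c)"
  proof (rule EE_cong)
    fix s assume "Inv n s"
    then have sI: "s 1 = 1 - s 0" unfolding Inv_def by auto
    show "(\<Sum>I<2. mix 2 g s I * c) = c" using mix0[of g s] mix1[of s g, OF sI] by (simp add: sum2) (simp add: algebra_simps)
  qed
  finally show ?case using Suc by simp
qed

end



context run begin

abbreviation "lnE n \<equiv> EE T e g n (\<lambda>s. ln (s 0))"
abbreviation "PE n \<equiv> EE T e g n (\<lambda>s. s 0)"
abbreviation "RE n \<equiv> EE T e g n (\<lambda>s. (1 - s 0) / s 0)"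
abbreviation "GE n \<equiv> EE T e g n (\<lambda>s. Gf e g (s 0))"

lemma InvD: "Inv n s \<Longrightarrow> 0 < s 0" "Inv n s \<Longrightarrow> s 0 < 1" "Inv n s \<Longrightarrow> n \<le> T div 100 \<Longrightarrow> s 0 \<le> 1/2"
  unfolding Inv_def by auto

lemma D1: assumes "Suc n \<le> T div 100" shows "lnE (Suc n) \<le> lnE n - e * (1 - PE n) - GE n"
proof -
  have "lnE (Suc n) = EE T e g n (\<lambda>s. mm g (s 0) * ln (U1 e g (s 0)) + (1 - mm g (s 0)) * ln (s 0))"
    by (rule step1[OF assms])
  also have "\<dots> \<le> EE T e g n (\<lambda>s. ln (s 0) - e * (1 - s 0) - Gf e g (s 0))"
    by (rule EE_mono) (use L1 InvD in auto)
  also have "\<dots> = lnE n - e * (1 - PE n) - GE n"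
    by (simp add: EE_diff EE_cmult EE_const)
  finally show ?thesis .
qed

lemma D2: assumes "\<not> Suc n \<le> T div 100" shows "lnE (Suc n) \<le> lnE n + e * (1 - PE n)"
proof -
  have "lnE (Suc n) = EE T e g n (\<lambda>s. mm g (s 0) * ln (s 0) + (1 - mm g (s 0)) * ln (U2 e g (s 0)))"
    by (rule step2[OF assms])
  also have "\<dots> \<le> EE T e g n (\<lambda>s. ln (s 0) + e * (1 - s 0))"
    by (rule EE_mono) (use L2 InvD in auto)
  also have "\<dots> = lnE n + e * (1 - PE n)"
    by (simp add: EE_add EE_diff EE_cmult EE_const)
  finally show ?thesis .
qed

lemma D3: assumes "Suc n \<le> T div 100" shows "PE (Suc n) \<le> (1 - e/2) * PE n"
proof -
  have "PE (Suc n) = EE T e g n (\<lambda>s. mm g (s 0) * U1 e g (s 0) + (1 - mm g (s 0)) * s 0)"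
    by (rule step1[OF assms])
  also have "\<dots> \<le> EE T e g n (\<lambda>s. (1 - e/2) * s 0)"
    by (rule EE_mono) (use L5 InvD assms in auto)
  also have "\<dots> = (1 - e/2) * PE n"
    by (simp add: EE_cmult)
  finally show ?thesis .
qed

lemma D4a: assumes "Suc n \<le> T div 100" shows "RE (Suc n) \<le> (1 + 2*e) * RE n"
proof -
  have "RE (Suc n) = EE T e g n (\<lambda>s. mm g (s 0) * ((1 - U1 e g (s 0)) / U1 e g (s 0)) + (1 - mm g (s 0)) * ((1 - s 0) / s 0))"
    by (rule step1[OF assms])
  also have "\<dots> \<le> EE T e g n (\<lambda>s. (1 + 2*e) * ((1 - s 0) / s 0))"
    by (rule EE_mono) (use L3 InvD in auto)
  also have "\<dots> = (1 + 2*e) * RE n"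
    by (rule EE_cmult)
  finally show ?thesis .
qed

lemma D4b: assumes "\<not> Suc n \<le> T div 100" shows "RE (Suc n) \<le> (1 - 2*e/3) * RE n"
proof -
  have "RE (Suc n) = EE T e g n (\<lambda>s. mm g (s 0) * ((1 - s 0) / s 0) + (1 - mm g (s 0)) * ((1 - U2 e g (s 0)) / U2 e g (s 0)))"
    by (rule step2[OF assms])
  also have "\<dots> \<le> EE T e g n (\<lambda>s. (1 - 2*e/3) * ((1 - s 0) / s 0))"
    by (rule EE_mono) (use L4 InvD in auto)
  also have "\<dots> = (1 - 2*e/3) * RE n"
    by (rule EE_cmult)
  finally show ?thesis .
qed

lemma D5a: "0 \<le> GE n"
proof -
  have "EE T e g n (\<lambda>s. 0) \<le> GE n" by (rule EE_mono) (use Gf_nonneg InvD in auto)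
  then show ?thesis by (simp add: EE_const)
qed

lemma D5b: assumes "n \<le> T div 100" shows "e^2/16 * (3/(2*g) - PE n / g^2) \<le> GE n"
proof -
  have "EE T e g n (\<lambda>s. e^2/16 * (3/(2*g) - (1/g^2) * s 0)) \<le> GE n"
    by (rule EE_mono) (use Gf_lower InvD assms in auto)
  moreover have "EE T e g n (\<lambda>s. e^2/16 * (3/(2*g) - (1/g^2) * s 0)) = e^2/16 * (3/(2*g) - PE n / g^2)"
  proof -
    have "EE T e g n (\<lambda>s. e^2/16 * (3/(2*g) - (1/g^2) * s 0)) = e^2/16 * EE T e g n (\<lambda>s. 3/(2*g) - (1/g^2) * s 0)"
      by (rule EE_cmult)
    also have "EE T e g n (\<lambda>s. 3/(2*g) - (1/g^2) * s 0) = EE T e g n (\<lambda>s. 3/(2*g)) - EE T e g n (\<lambda>s. (1/g^2) * s 0)"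
      by (rule EE_diff)
    also have "EE T e g n (\<lambda>s. (1/g^2) * s 0) = (1/g^2) * PE n" by (rule EE_cmult)
    finally show ?thesis by (simp add: EE_const)
  qed
  ultimately show ?thesis by simp
qed

lemma D6: "- RE n \<le> lnE n"
proof -
  have "EE T e g n (\<lambda>s. (-1) * ((1 - s 0) / s 0)) \<le> lnE n"
  proof (rule EE_mono)
    fix s assume "Inv n s"
    then have "- ((1 - s 0) / s 0) \<le> ln (s 0)" using ln_lower InvD by blast
    then show "(-1) * ((1 - s 0) / s 0) \<le> ln (s 0)" by (simp only: mult_minus1)
  qed
  moreover have "EE T e g n (\<lambda>s. (-1) * ((1 - s 0) / s 0)) = - RE n" by (subst EE_cmult) simp
  ultimately show ?thesis by simp
qed

lemma round_loss:
  "exp_round_loss 2 e g (two_phase T) (Suc n) =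
     (if Suc n \<le> T div 100 then (1 - g) * PE n + g/2 else (1 - g) * (1 - PE n) + g/2)"
proof -
  have "exp_round_loss 2 e g (two_phase T) (Suc n) = EE T e g n (\<lambda>s. \<Sum>j<2. mix 2 g s j * two_phase T (Suc n) j)"
    by (simp add: exp_round_loss_def EE_def)
  also have "\<dots> = EE T e g n (\<lambda>s. if Suc n \<le> T div 100 then (1 - g) * s 0 + g/2 else (1 - g) * (1 - s 0) + g/2)"
  proof (rule EE_cong)
    fix s assume "Inv n s"
    then have sI: "s 1 = 1 - s 0" unfolding Inv_def by auto
    show "(\<Sum>j<2. mix 2 g s j * two_phase T (Suc n) j) = (if Suc n \<le> T div 100 then (1 - g) * s 0 + g/2 else (1 - g) * (1 - s 0) + g/2)"
      using mix0[of g s] mix1[of s g, OF sI] by (simp add: sum2 two_phase_def mm_def algebra_simps)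
  qed
  also have "\<dots> = (if Suc n \<le> T div 100 then (1 - g) * PE n + g/2 else (1 - g) * (1 - PE n) + g/2)"
    by (simp add: EE_add EE_diff EE_cmult EE_const)
  finally show ?thesis .
qed

end



lemma telescope: assumes "\<And>n. n < N \<Longrightarrow> a (Suc n) \<le> a n + (d n :: real)" shows "a N \<le> a 0 + (\<Sum>n<N. d n)"
  using assms by (induction N) (auto, smt (verit) less_Suc_eq)

lemma sum_split: fixes M N :: nat assumes "M \<le> N" shows "(\<Sum>n<N. f n) = (\<Sum>n<M. f n) + (\<Sum>n\<in>{M..<N}. (f n :: real))"
proof -
  have "{..<N} = {..<M} \<union> {M..<N}" using assms by auto
  then show ?thesis by (simp add: sum.union_disjoint ivl_disj_int)
qed

lemma sum_shift1: "(\<Sum>t=1..T. f t) = (\<Sum>n<T. (f (Suc n) :: real))"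
  by (induction T) (auto simp: sum.atLeast1_atMost_eq)

lemma exp_half: "1/2 \<le> ln (2::real)"
proof -
  have "exp (1/2::real) \<le> 1 + 2 * (1/2)" by (rule real_exp_bound_lemma) auto
  then have "exp (1/2::real) \<le> 2" by simp
  then show ?thesis by (metis exp_le_cancel_iff exp_ln zero_less_numeral)
qed

context run begin

lemma P_bound: "n \<le> T div 100 \<Longrightarrow> PE n \<le> 1/2 * (1 - e/2)^n"
proof (induction n)
  case 0 show ?case by (simp add: EE_0 pi_init_def)
next
  case (Suc n)
  have "PE (Suc n) \<le> (1 - e/2) * PE n" using D3 Suc.prems by simp
  also have "\<dots> \<le> (1 - e/2) * (1/2 * (1 - e/2)^n)"
    using Suc e_small by (intro mult_left_mono) auto
  finally show ?case by simp
qed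

lemma R_bound1: "n \<le> T div 100 \<Longrightarrow> RE n \<le> (1 + 2*e)^n"
proof (induction n)
  case 0 show ?case by (simp add: EE_0 pi_init_def)
next
  case (Suc n)
  have "RE (Suc n) \<le> (1 + 2*e) * RE n" using D4a Suc.prems by simp
  also have "\<dots> \<le> (1 + 2*e) * (1 + 2*e)^n"
    using Suc e0 by (intro mult_left_mono) auto
  finally show ?case by simp
qed

lemma R_bound2: "RE (T div 100 + k) \<le> (1 + 2*e)^(T div 100) * (1 - 2*e/3)^k"
proof (induction k)
  case 0 show ?case using R_bound1 by simp
next
  case (Suc k)
  have "RE (T div 100 + Suc k) \<le> (1 - 2*e/3) * RE (T div 100 + k)" using D4b[of "T div 100 + k"] by simp
  also have "\<dots> \<le> (1 - 2*e/3) * ((1 + 2*e)^(T div 100) * (1 - 2*e/3)^k)"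
    using Suc e_small by (intro mult_left_mono) auto
  finally show ?case by (simp add: algebra_simps)
qed

lemma regret_formula:
  assumes T1T: "T div 100 \<le> T"
  shows "exp_regret 2 e g (two_phase T) T =
    (\<Sum>n<T div 100. (1 - g) * PE n + g/2) + (\<Sum>n\<in>{T div 100..<T}. (1 - g) * (1 - PE n) + g/2)
      - min (real (T div 100)) (real (T - T div 100))"
proof -
  define T1 where "T1 = T div 100"
  have T1T': "T1 \<le> T" using T1T unfolding T1_def .
  have L: "(\<Sum>t=1..T. exp_round_loss 2 e g (two_phase T) t) =
    (\<Sum>n<T1. (1 - g) * PE n + g/2) + (\<Sum>n\<in>{T1..<T}. (1 - g) * (1 - PE n) + g/2)"
  proof -
    have "(\<Sum>t=1..T. exp_round_loss 2 e g (two_phase T) t) = (\<Sum>n<T. exp_round_loss 2 e g (two_phase T) (Suc n))"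
      by (rule sum_shift1)
    also have "\<dots> = (\<Sum>n<T1. exp_round_loss 2 e g (two_phase T) (Suc n)) + (\<Sum>n\<in>{T1..<T}. exp_round_loss 2 e g (two_phase T) (Suc n))"
      by (rule sum_split[OF T1T'])
    also have "(\<Sum>n<T1. exp_round_loss 2 e g (two_phase T) (Suc n)) = (\<Sum>n<T1. (1 - g) * PE n + g/2)"
      by (intro sum.cong refl) (simp add: round_loss T1_def)
    also have "(\<Sum>n\<in>{T1..<T}. exp_round_loss 2 e g (two_phase T) (Suc n)) = (\<Sum>n\<in>{T1..<T}. (1 - g) * (1 - PE n) + g/2)"
      by (intro sum.cong refl) (simp add: round_loss T1_def)
    finally show ?thesis .
  qed
  have M0: "(\<Sum>t=1..T. two_phase T t 0) = real T1"
  proof -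
    have "(\<Sum>t=1..T. two_phase T t 0) = (\<Sum>n<T. two_phase T (Suc n) 0)" by (rule sum_shift1)
    also have "\<dots> = (\<Sum>n<T1. two_phase T (Suc n) 0) + (\<Sum>n\<in>{T1..<T}. two_phase T (Suc n) 0)"
      by (rule sum_split[OF T1T'])
    also have "(\<Sum>n<T1. two_phase T (Suc n) 0) = (\<Sum>n<T1. 1)"
      by (intro sum.cong refl) (simp add: two_phase_def T1_def)
    also have "(\<Sum>n\<in>{T1..<T}. two_phase T (Suc n) 0) = (\<Sum>n\<in>{T1..<T}. 0)"
      by (intro sum.cong refl) (simp add: two_phase_def T1_def)
    finally show ?thesis by simp
  qed
  have M1: "(\<Sum>t=1..T. two_phase T t 1) = real (T - T1)"
  proof -
    have "(\<Sum>t=1..T. two_phase T t 1) = (\<Sum>n<T. two_phase T (Suc n) 1)" by (rule sum_shift1)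
    also have "\<dots> = (\<Sum>n<T1. two_phase T (Suc n) 1) + (\<Sum>n\<in>{T1..<T}. two_phase T (Suc n) 1)"
      by (rule sum_split[OF T1T'])
    also have "(\<Sum>n<T1. two_phase T (Suc n) 1) = (\<Sum>n<T1. 0)"
      by (intro sum.cong refl) (simp add: two_phase_def T1_def)
    also have "(\<Sum>n\<in>{T1..<T}. two_phase T (Suc n) 1) = (\<Sum>n\<in>{T1..<T}. 1)"
      by (intro sum.cong refl) (auto simp: two_phase_def T1_def)
    finally show ?thesis using T1T' by simp
  qed
  have U: "{..<2::nat} = {0, 1}" by auto
  show ?thesis unfolding exp_regret_def L U using M0 M1 by (simp add: T1_def)
qed

lemma main:
  assumes dvd: "100 dvd T" and T1ge: "2 \<le> T div 100"
    and A: "exp (- (e * real (T div 100 div 2) / 2)) \<le> g"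
    and B: "exp (- (64 * e * real (T div 100))) \<le> 1/2"
  shows "e * real T / (6400 * g) + 49/100 * g * real T \<le> exp_regret 2 e g (two_phase T) T"
proof -
  define T1 where "T1 = T div 100"
  have TT: "T = 100 * T1" using dvd unfolding T1_def by auto
  have T1T: "T1 \<le> T" unfolding T1_def by simp
  define S1 where "S1 = (\<Sum>n<T1. PE n)"
  define S2 where "S2 = (\<Sum>n\<in>{T1..<T}. 1 - PE n)"
  define SG where "SG = (\<Sum>n<T1. GE n)"
  have RT: "RE T \<le> 1/2"
  proof -
    have "RE T = RE (T1 + 99 * T1)" using TT by (simp add: algebra_simps)
    also have "\<dots> \<le> (1 + 2*e)^T1 * (1 - 2*e/3)^(99 * T1)" using R_bound2 unfolding T1_def by blast
    also have "\<dots> \<le> exp (2*e)^T1 * exp (-(2*e/3))^(99 * T1)"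
    proof (intro mult_mono power_mono)
      show "1 + 2*e \<le> exp (2*e)" by (rule exp_ge_add_one_self)
      show "1 - 2*e/3 \<le> exp (-(2*e/3))" using exp_ge_add_one_self[of "-(2*e/3)"] by simp
      show "0 \<le> 1 + 2*e" using e0 by simp
      show "0 \<le> 1 - 2*e/3" using e_small by simp
      show "0 \<le> exp (2*e)^T1" by simp
      show "0 \<le> (1 - 2*e/3)^(99 * T1)" using e_small by simp
    qed
    also have "\<dots> = exp (- (64 * e * real T1))"
      by (simp add: exp_of_nat_mult[symmetric] exp_add[symmetric] algebra_simps)
    also have "\<dots> \<le> 1/2" using B unfolding T1_def .
    finally show ?thesis .
  qed
  define d where "d n = (if n < T1 then -(e * (1 - PE n) + GE n) else e * (1 - PE n))" for n
  have tel: "lnE T \<le> lnE 0 + (\<Sum>n<T. d n)"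
  proof (rule telescope)
    fix n assume "n < T"
    show "lnE (Suc n) \<le> lnE n + d n"
    proof (cases "Suc n \<le> T div 100")
      case True then have "n < T1" unfolding T1_def by simp
      then show ?thesis using D1[OF True] unfolding d_def by simp
    next
      case False then have "\<not> n < T1" unfolding T1_def by simp
      then show ?thesis using D2[OF False] unfolding d_def by simp
    qed
  qed
  have l0: "lnE 0 = - ln 2" by (simp add: EE_0 pi_init_def ln_div)
  have dsum: "(\<Sum>n<T. d n) = - (e * (real T1 - S1) + SG) + e * S2"
  proof -
    have "(\<Sum>n<T. d n) = (\<Sum>n<T1. d n) + (\<Sum>n\<in>{T1..<T}. d n)" by (rule sum_split[OF T1T])
    also have "(\<Sum>n<T1. d n) = (\<Sum>n<T1. -(e * (1 - PE n) + GE n))" by (intro sum.cong refl) (simp add: d_def)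
    also have "\<dots> = - (e * (real T1 - S1) + SG)"
      by (simp add: S1_def SG_def sum.distrib sum_subtractf sum_distrib_left[symmetric] sum_negf)
    also have "(\<Sum>n\<in>{T1..<T}. d n) = (\<Sum>n\<in>{T1..<T}. e * (1 - PE n))" by (intro sum.cong refl) (simp add: d_def)
    also have "\<dots> = e * S2" by (simp add: S2_def sum_distrib_left)
    finally show ?thesis .
  qed
  have key: "e * (real T1 - S1) + SG \<le> e * S2"
    using tel l0 dsum D6[of T] RT exp_half by linarith
  then have key2: "real T1 - S1 + SG / e \<le> S2"
    using e0 by (simp add: field_simps)
  have Gn: "e^2 / (16 * g) \<le> GE n" if n: "T1 div 2 \<le> n" "n < T1" for n
  proof -
    have "PE n \<le> 1/2 * (1 - e/2)^n" using P_bound n unfolding T1_def by simp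
    also have "\<dots> \<le> 1/2 * (1 - e/2)^(T1 div 2)"
      using n e_small e0 by (intro mult_left_mono power_decreasing) auto
    also have "\<dots> \<le> 1/2 * exp (-(e/2))^(T1 div 2)"
      using e_small exp_ge_add_one_self[of "-(e/2)"] by (intro mult_left_mono power_mono) auto
    also have "\<dots> = 1/2 * exp (- (e * real (T1 div 2) / 2))"
      by (simp add: exp_of_nat_mult[symmetric] algebra_simps)
    also have "\<dots> \<le> g/2" using A unfolding T1_def by simp
    finally have P: "PE n \<le> g/2" .
    have "e^2 / (16 * g) = e^2/16 * (3/(2*g) - (g/2) / g^2)" using g0 by (simp add: field_simps power2_eq_square)
    also have "\<dots> \<le> e^2/16 * (3/(2*g) - PE n / g^2)"
      using P g0 by (intro mult_left_mono diff_left_mono divide_right_mono) auto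
    also have "\<dots> \<le> GE n" using D5b n unfolding T1_def by simp
    finally show ?thesis .
  qed
  have SGb: "real T1 * e^2 / (32 * g) \<le> SG"
  proof -
    have "real T1 * e^2 / (32 * g) \<le> real (T1 - T1 div 2) * (e^2 / (16 * g))"
    proof -
      have "real T1 / 2 \<le> real (T1 - T1 div 2)" by linarith
      then have "real T1 / 2 * (e^2 / (16 * g)) \<le> real (T1 - T1 div 2) * (e^2 / (16 * g))"
        using g0 by (intro mult_right_mono) auto
      then show ?thesis by (simp add: field_simps)
    qed
    also have "\<dots> = (\<Sum>n\<in>{T1 div 2..<T1}. e^2 / (16 * g))" by simp
    also have "\<dots> \<le> (\<Sum>n\<in>{T1 div 2..<T1}. GE n)" by (intro sum_mono Gn) auto
    also have "\<dots> \<le> SG"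
      unfolding SG_def by (rule sum_mono2) (auto simp: D5a)
    finally show ?thesis .
  qed
  have reg: "exp_regret 2 e g (two_phase T) T = (1 - g) * (S1 + S2) + g * real T / 2 - real T1"
  proof -
    have "exp_regret 2 e g (two_phase T) T =
      (\<Sum>n<T1. (1 - g) * PE n + g/2) + (\<Sum>n\<in>{T1..<T}. (1 - g) * (1 - PE n) + g/2)
      - min (real T1) (real (T - T1))"
      using regret_formula T1T unfolding T1_def by blast
    also have "min (real T1) (real (T - T1)) = real T1" using TT by simp
    also have "(\<Sum>n<T1. (1 - g) * PE n + g/2) = (1 - g) * S1 + g/2 * real T1"
      by (simp add: S1_def sum.distrib sum_distrib_left)
    also have "(\<Sum>n\<in>{T1..<T}. (1 - g) * (1 - PE n) + g/2) = (1 - g) * S2 + g/2 * real (T - T1)"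
      by (simp add: S2_def sum.distrib sum_distrib_left[symmetric])
    finally show ?thesis using T1T by (simp add: of_nat_diff algebra_simps) (simp add: field_simps)
  qed
  have "(1 - g) * (real T1 + SG / e) \<le> (1 - g) * (S1 + S2)"
    using key2 g1 by (intro mult_left_mono) auto
  moreover have "real T1 * e / (64 * g) \<le> (1 - g) * (SG / e)"
  proof -
    have "real T1 * e / (32 * g) \<le> SG / e" using SGb e0 by (simp add: field_simps power2_eq_square)
    moreover have "0 \<le> SG / e" using SGb e0 g0 by (smt (verit) divide_nonneg_nonneg mult_nonneg_nonneg of_nat_0_le_iff zero_le_power2)
    ultimately have "1/2 * (real T1 * e / (32 * g)) \<le> (1 - g) * (SG / e)"
      using g1 e0 g0 by (intro mult_mono) auto
    then show ?thesis by simp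
  qed
  ultimately have "real T1 * e / (64 * g) + g * (real T / 2 - real T1) \<le> exp_regret 2 e g (two_phase T) T"
    unfolding reg by (simp add: algebra_simps)
  moreover have "e * real T / (6400 * g) + 49/100 * g * real T = real T1 * e / (64 * g) + g * (real T / 2 - real T1)"
    using TT by (simp add: field_simps)
  ultimately show ?thesis by simp
qed

end


lemma ev1: "eventually (\<lambda>T::nat. exp (- (real T powr (1/3) / 800)) \<le> real T powr (-2/3)) sequentially"
  by real_asymp
lemma ev2: "eventually (\<lambda>T::nat. exp (-(64/100 * real T powr (1/3))) \<le> 1/2) sequentially"
  by real_asymp

lemma inv_bound:
  fixes e g x :: real
  assumes "0 < e" "0 < g" "0 < x" "1 \<le> e^3 * x^2"
  shows "1 / e \<le> e * x / g + g * x"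
proof -
  define a where "a = e * x / g"
  define b where "b = g * x"
  have ab: "0 \<le> a" "0 \<le> b" using assms unfolding a_def b_def by auto
  have prod: "a * b = e * x^2" unfolding a_def b_def using assms by (simp add: power2_eq_square)
  have "(1 / e)^2 \<le> e * x^2"
  proof -
    have q: "(1/e)^2 * e^3 = e" using assms by (simp add: power2_eq_square power3_eq_cube)
    have "(1/e)^2 * (e^3 * x^2) = ((1/e)^2 * e^3) * x^2" by (simp only: mult.assoc)
    also have "\<dots> = e * x^2" by (simp only: q)
    finally have eq: "(1/e)^2 * (e^3 * x^2) = e * x^2" .
    have ineq: "(1/e)^2 * 1 \<le> (1/e)^2 * (e^3 * x^2)" using assms by (intro mult_left_mono) auto
    from ineq show ?thesis unfolding eq by simp
  qed
  also have "e * x^2 \<le> (a + b)^2"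
  proof -
    have "0 \<le> (a - b)^2" by simp
    then have "4 * (a * b) \<le> (a + b)^2" by (simp add: power2_eq_square algebra_simps)
    moreover have "0 \<le> a * b" using ab by simp
    ultimately show ?thesis using prod by linarith
  qed
  finally have "(1 / e)^2 \<le> (a + b)^2" .
  moreover have "0 \<le> a + b" using ab by simp
  ultimately have "1 / e \<le> a + b" by (rule power2_le_imp_le)
  then show ?thesis unfolding a_def b_def .
qed

lemma e3: fixes e x :: real assumes "0 < x" "x powr (-2/3) \<le> e" shows "1 \<le> e^3 * x^2"
proof -
  have a: "(x powr (-2/3))^3 \<le> e^3" using assms by (intro power_mono) auto
  have b: "(x powr (-2/3))^3 = x powr (-2)"
  proof -
    have "(x powr (-2/3))^3 = x powr (real 3 * (-2/3))" using assms by (intro powr_power) auto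
    also have "real 3 * (-2/3) = (-2::real)" by simp
    finally show ?thesis .
  qed
  have c: "x powr (-2) * x^2 = 1"
  proof -
    have "x powr (-2) = inverse (x powr 2)" by (rule powr_minus)
    also have "x powr 2 = x powr (real 2)" by simp
    also have "\<dots> = x^2" by (rule powr_realpow[OF assms(1)])
    finally show ?thesis using assms by simp
  qed
  have "1 = x powr (-2) * x^2" using c by simp
  also have "\<dots> \<le> e^3 * x^2" using a b by (intro mult_right_mono) auto
  finally show ?thesis .
qed

lemma ex13: fixes e x :: real assumes "0 < x" "x powr (-2/3) \<le> e" shows "x powr (1/3) \<le> e * x"
proof -
  have "x powr (-2/3) * x \<le> e * x" using assms by (intro mult_right_mono) auto
  moreover have "x powr (-2/3) * x = x powr (1/3)"
  proof -
    have "x powr (-2/3) * x = x powr (-2/3) * x powr 1" using assms by simp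
    also have "\<dots> = x powr (-2/3 + 1)" by (rule powr_add[symmetric])
    also have "-2/3 + 1 = (1/3::real)" by simp
    finally show ?thesis .
  qed
  ultimately show ?thesis by simp
qed

theorem theorem3:
  fixes eta gamma :: "nat \<Rightarrow> real"
  assumes "\<And>T. T \<ge> 1 \<Longrightarrow> 100 dvd T \<Longrightarrow>
             valid_pair 2 (eta T) (gamma T) \<and> nontrivial_regime T (eta T) (gamma T)"
  shows "\<exists>c1 c2 c3 :: real. \<exists>T0 :: nat. c1 > 0 \<and> c2 > 0 \<and> c3 > 0 \<and>
           (\<forall>T. T \<ge> T0 \<longrightarrow> T \<ge> 1 \<longrightarrow> 100 dvd T \<longrightarrow>
              exp_regret 2 (eta T) (gamma T) (two_phase T) T \<ge>
                c1 * (1 / eta T) + c2 * (eta T * real T * 2 / gamma T) + c3 * (gamma T * real T))"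
proof -
  obtain N1 where N1: "\<And>T. T \<ge> N1 \<Longrightarrow> exp (- (real T powr (1/3) / 800)) \<le> real T powr (-2/3)"
    using ev1 unfolding eventually_sequentially by blast
  obtain N2 where N2: "\<And>T. T \<ge> N2 \<Longrightarrow> exp (-(64/100 * real T powr (1/3))) \<le> 1/2"
    using ev2 unfolding eventually_sequentially by blast
  define T0 where "T0 = max (max N1 N2) 200"
  have "\<forall>T. T \<ge> T0 \<longrightarrow> T \<ge> 1 \<longrightarrow> 100 dvd T \<longrightarrow>
              exp_regret 2 (eta T) (gamma T) (two_phase T) T \<ge>
                1/25600 * (1 / eta T) + 1/25600 * (eta T * real T * 2 / gamma T) + 1/4 * (gamma T * real T)"
  proof (intro allI impI)
    fix T :: nat assume T0: "T \<ge> T0" and T1: "T \<ge> 1" and dv: "100 dvd T"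
    define e where "e = eta T"
    define g where "g = gamma T"
    have vp': "valid_pair 2 e g" and nt: "nontrivial_regime T e g" using assms[OF T1 dv] unfolding e_def g_def by auto
    have e0: "0 < e" and g0: "0 < g" and g1: "g < 1/2" and eg0: "e * 2 / g \<le> 1/2"
      using vp' unfolding valid_pair_def by auto
    have eg: "4 * e \<le> g" using eg0 g0 by (simp add: divide_le_eq)
    interpret run e g T by unfold_locales (use e0 g0 g1 eg in auto)
    define x where "x = real T"
    have x0: "0 < x" using T1 unfolding x_def by simp
    have ep: "x powr (-2/3) \<le> e" using nt unfolding nontrivial_regime_def x_def by simp
    have ex: "x powr (1/3) \<le> e * x" by (rule ex13[OF x0 ep])
    have Tbig: "200 \<le> T" "N1 \<le> T" "N2 \<le> T" using T0 unfolding T0_def by auto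
    have T1v: "real (T div 100) = x / 100" using dv unfolding x_def by auto
    have T1ge: "2 \<le> T div 100" using Tbig by linarith
    have hd: "x / 400 \<le> real (T div 100 div 2)"
    proof -
      have "real (T div 100) \<le> 2 * real (T div 100 div 2) + 1" by linarith
      then show ?thesis using T1v T1ge by linarith
    qed
    have A: "exp (- (e * real (T div 100 div 2) / 2)) \<le> g"
    proof -
      have "x powr (1/3) / 800 \<le> e * real (T div 100 div 2) / 2"
      proof -
        have "e * (x / 400) \<le> e * real (T div 100 div 2)" using hd e0 by (intro mult_left_mono) auto
        then show ?thesis using ex by simp
      qed
      then have "exp (- (e * real (T div 100 div 2) / 2)) \<le> exp (- (x powr (1/3) / 800))" by simp
      also have "\<dots> \<le> x powr (-2/3)" using N1[OF Tbig(2)] unfolding x_def .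
      also have "\<dots> \<le> g" using ep eg e0 by linarith
      finally show ?thesis .
    qed
    have B: "exp (- (64 * e * real (T div 100))) \<le> 1/2"
    proof -
      have "e * x = 100 * (e * real (T div 100))" using T1v by simp
      then have "64/100 * x powr (1/3) \<le> 64 * e * real (T div 100)" using ex by linarith
      then have "exp (- (64 * e * real (T div 100))) \<le> exp (-(64/100 * x powr (1/3)))" by simp
      also have "\<dots> \<le> 1/2" using N2[OF Tbig(3)] unfolding x_def .
      finally show ?thesis .
    qed
    have M: "e * real T / (6400 * g) + 49/100 * g * real T \<le> exp_regret 2 e g (two_phase T) T"
      by (rule main[OF dv T1ge A B])
    have I: "1 / e \<le> e * x / g + g * x" by (rule inv_bound[OF e0 g0 x0 e3[OF x0 ep]])
    define X where "X = e * x / g"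
    have X0: "0 \<le> X" using e0 g0 x0 unfolding X_def by simp
    have Y0: "0 \<le> g * x" using g0 x0 by simp
    have eq1: "e * real T / (6400 * g) = X / 6400" unfolding X_def x_def by simp
    have eq2: "e * real T * 2 / g = 2 * X" unfolding X_def x_def by simp
    show "exp_regret 2 (eta T) (gamma T) (two_phase T) T \<ge>
                1/25600 * (1 / eta T) + 1/25600 * (eta T * real T * 2 / gamma T) + 1/4 * (gamma T * real T)"
    proof -
      have eq3: "49/100 * g * real T = 49/100 * (g * x)" unfolding x_def by simp
      have eq4: "g * real T = g * x" unfolding x_def by simp
      have I': "1 / e \<le> X + g * x" using I unfolding X_def .
      have "1/25600 * (1 / e) + 1/25600 * (e * real T * 2 / g) + 1/4 * (g * real T) \<le> exp_regret 2 e g (two_phase T) T"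
        using M I' X0 Y0 eq1 eq2 eq3 eq4 by linarith
      then show ?thesis unfolding e_def g_def .
    qed
  qed
  then show ?thesis by (intro exI[of _ "1/25600"] exI[of _ "1/25600"] exI[of _ "1/4"] exI[of _ T0]) auto
qed

end
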